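(* For every $t\ge0$, $k\ge1$, every collection $\Omega$ of functions and every collection $\Theta$ of aggregation functions: (1) $\rho_1\bigl(\mathsf{cr}^{(t)}\bigr)\subseteq\rho_1\bigl(\mathsf{GTL}_2^{(t)}(\Omega,\Theta)\bigr)$; (2) $\rho_1\bigl(\mathsf{vwl}_k^{(t)}\bigr)\subseteq\rho_1\bigl(\mathsf{TL}_{k+1}^{(t)}(\Omega,\Theta)\bigr)$; (3) $\rho_0\bigl(\mathsf{gwl}_k^{(t)}\bigr)\subseteq\rho_0\bigl(\mathsf{TL}_{k+1}^{(t+1)}(\Omega,\Theta)\bigr)$.
   Context: Fix integers $n\ge1$, $\ell\ge1$. A graph is $G=(V_G,E_G,\mathrm{col}_G)$ with $V_G=[n]$, $E_G$ a set of unordered pairs of distinct vertices, $\mathrm{col}_G:V_G\to\mathbb R^\ell$; $N_G(v)=\{u:uv\in E_G\}$. Extended tensor language $\mathsf{TL}(\Omega,\Theta)$: $\Omega$ is a collection of functions $f:\mathbb R^p\to\mathbb R$; $\Theta$ a collection of aggregation functions $F$, each assigning a real number to every finite multiset of reals. Expressions: $\varphi::=\mathbf 1_{x=y}\mid \mathbf 1_{x\neq y}\mid E(x,y)\mid P_s(x)\mid \varphi\cdot\varphi\mid \varphi+\varphi\mid a\cdot\varphi\mid f(\varphi_1,\dots,\varphi_p)\mid \sum_x\varphi\mid \mathrm{aggr}^F_{x_j}(\varphi)\mid\mathrm{aggr}^F_{x_j}(\varphi\mid E(x_i,x_j))$ with $F\in\Theta$, where in the last construct $\varphi$ has no free variable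 other than $x_j$. Free variables as usual, with $\mathrm{free}(\mathrm{aggr}^F_{x_j}(\varphi))=\mathrm{free}(\varphi)\setminus\{x_j\}$ and $\mathrm{free}(\mathrm{aggr}^F_{x_j}(\varphi\mid E(x_i,x_j)))=\{x_i\}$. Semantics: $E$ adjacency indicator, $P_s(x)=\mathrm{col}_G(\nu(x))_s$, $\mathbf 1_{x\,\mathrm{op}\,y}$ (dis)equality indicator, $\cdot,+,a\cdot,f$ pointwise, $[\![\sum_x\varphi]\!]^\nu_G=\sum_{v\in V_G}[\![\varphi]\!]^{\nu[x\mapsto v]}_G$, $[\![\mathrm{aggr}^F_{x_j}(\varphi)]\!]^\nu_G=F(\{\!\{[\![\varphi]\!]^{\nu[x_j\mapsto v]}_G:v\in V_G\}\!\})$, $[\![\mathrm{aggr}^F_{x_j}(\varphi\mid E(x_i,x_j))]\!]^\nu_G=F(\{\!\{[\![\varphi]\!]^{\nu[x_j\mapsto v]}_G:v\in N_G(\nu(x_i))\}\!\})$. Aggregation depth: $0$ for atoms, max for $\cdot,+,f(\dots)$, unchanged by $a\cdot$, and $+1$ for $\sum_x$ and both aggregation constructs. $\mathsf{TL}_{k}^{(t)}(\Omega,\Theta)$: expressions using only variables $x_1,\dots,x_k$ (re-binding allowed) with aggregation depth $\le t$. Guarded fragment $\mathsf{GTL}_2(\Omega,\Theta)$: expressions with exactly one free variable ($x_1$ or $x_2$), built from $\mathbf 1_{x_i=x_i}$, $\mathbf 1_{x_i\ne x_i}$, $P_s(x_i)$ by $\cdot$, $+$ of expressions with the same single free variable,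 $a\cdot$, $f(\varphi_1,\dots,\varphi_p)$ with all $\varphi_j$ sharing the same single free variable, $\sum_{x_j}(E(x_i,x_j)\cdot\varphi)$ and $\mathrm{aggr}^F_{x_j}(\varphi\mid E(x_i,x_j))$ with $\{i,j\}=\{1,2\}$ and $\varphi$ with free variable $x_j$; $\mathsf{GTL}_2^{(t)}(\Omega,\Theta)$ those of aggregation depth $\le t$. For a set $\mathcal L$ of expressions, $\rho_1(\mathcal L)$ is the set of pairs $((G,v),(H,w))$ with $[\![\varphi]\!]^{x_1\mapsto v}_G=[\![\varphi]\!]^{x_1\mapsto w}_H$ for all $\varphi\in\mathcal L$ with free variables among $\{x_1\}$; $\rho_0(\mathcal L)$ the set of pairs of graphs agreeing on all closed expressions of $\mathcal L$. Color refinement: $\mathsf{cr}^{(0)}(G,v)=\mathrm{col}_G(v)$, $\mathsf{cr}^{(t+1)}(G,v)=(\mathsf{cr}^{(t)}(G,v),\{\!\{\mathsf{cr}^{(t)}(G,u):u\in N_G(v)\}\!\})$. $k$-WL: $\mathsf{atp}_k(G,\mathbf v)$ records for $i<j$ whether $v_i=v_j$ and whether $v_iv_j\in E_G$, and all $\mathrm{col}_G(v_i)$; $\mathsf{wl}_k^{(0)}=\mathsf{atp}_k$, $\mathsf{wl}_k^{(t+1)}(G,\mathbf v)=(\mathsf{wl}_k^{(t)}(G,\mathbf v),\{\!\{(\mathsf{atp}_{k+1}(G,(v_1,\dots,v_k,u)),\mathsf{wl}_k^{(t)}(G,\mathbf v[u/1]),\dots,\mathsf{wl}_k^{(t)}(G,\mathbf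 v[u/k])):u\in V_G\}\!\})$ ($\mathbf v[u/i]$ replaces the $i$-th entry by $u$); $\mathsf{vwl}_k^{(t)}(G,v)=\mathsf{wl}_k^{(t)}(G,(v,\dots,v))$; $\mathsf{gwl}_k^{(t)}(G)=\{\!\{\mathsf{wl}_k^{(t)}(G,\mathbf v):\mathbf v\in V_G^k\}\!\}$. Labels compared as formal objects; $\rho_1(\mathsf{cr}^{(t)})$, $\rho_1(\mathsf{vwl}_k^{(t)})$, $\rho_0(\mathsf{gwl}_k^{(t)})$ are the pairs with equal labels. *)

theory Defs
  imports Complex_Main "HOL-Library.Multiset"
begin

text \<open>A graph on the vertex set [n] = {1..n}: a set of unordered pairs (2-element sets)
  of distinct vertices, and a colouring assigning to each vertex a real vector of length l
  (represented as a list).\<close>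

type_synonym graph = "nat set set \<times> (nat \<Rightarrow> real list)"

definition verts :: "nat \<Rightarrow> nat set" where
  "verts n = {1..n}"

definition edges :: "graph \<Rightarrow> nat set set" where
  "edges G = fst G"

definition col :: "graph \<Rightarrow> nat \<Rightarrow> real list" where
  "col G = snd G"

definition wf_graph :: "nat \<Rightarrow> nat \<Rightarrow> graph \<Rightarrow> bool" where
  "wf_graph n l G \<longleftrightarrow>
     edges G \<subseteq> {{u, v} | u v. u \<in> verts n \<and> v \<in> verts n \<and> u \<noteq> v} \<and>
     (\<forall>v \<in> verts n. length (col G v) = l)"

definition adj :: "graph \<Rightarrow> nat \<Rightarrow> nat \<Rightarrow> bool" where
  "adj G u v \<longleftrightarrow> {u, v} \<in> edges G"

definition nbrs :: "nat \<Rightarrow> graph \<Rightarrow> nat \<Rightarrow> nat set" where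
  "nbrs n G v = {u \<in> verts n. adj G v u}"

text \<open>Fun f args stands for f(args) (f a function R^p -> R with p = length args, given on lists);
  Aggr F j phi is aggr^F_{x_j}(phi); AggrN F i j phi is aggr^F_{x_j}(phi | E(x_i,x_j));
  Pcol s x is P_s(x) with 0-based coordinate index s < l.\<close>

datatype tl =
    EqV nat nat
  | NeqV nat nat
  | Edge nat nat
  | Pcol nat nat
  | Mul tl tl
  | Add tl tl
  | Scal real tl
  | Fun "real list \<Rightarrow> real" "tl list"
  | Sum nat tl
  | Aggr "real multiset \<Rightarrow> real" nat tl
  | AggrN "real multiset \<Rightarrow> real" nat nat tl

fun fv :: "tl \<Rightarrow> nat set" where
  "fv (EqV x y) = {x, y}"
| "fv (NeqV x y) = {x, y}"
| "fv (Edge x y) = {x, y}"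
| "fv (Pcol s x) = {x}"
| "fv (Mul a b) = fv a \<union> fv b"
| "fv (Add a b) = fv a \<union> fv b"
| "fv (Scal c a) = fv a"
| "fv (Fun f args) = \<Union> (set (map fv args))"
| "fv (Sum x a) = fv a - {x}"
| "fv (Aggr F x a) = fv a - {x}"
| "fv (AggrN F i j a) = {i}"

fun vars :: "tl \<Rightarrow> nat set" where
  "vars (EqV x y) = {x, y}"
| "vars (NeqV x y) = {x, y}"
| "vars (Edge x y) = {x, y}"
| "vars (Pcol s x) = {x}"
| "vars (Mul a b) = vars a \<union> vars b"
| "vars (Add a b) = vars a \<union> vars b"
| "vars (Scal c a) = vars a"
| "vars (Fun f args) = \<Union> (set (map vars args))"
| "vars (Sum x a) = insert x (vars a)"
| "vars (Aggr F x a) = insert x (vars a)"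
| "vars (AggrN F i j a) = {i, j} \<union> vars a"

fun depth :: "tl \<Rightarrow> nat" where
  "depth (EqV x y) = 0"
| "depth (NeqV x y) = 0"
| "depth (Edge x y) = 0"
| "depth (Pcol s x) = 0"
| "depth (Mul a b) = max (depth a) (depth b)"
| "depth (Add a b) = max (depth a) (depth b)"
| "depth (Scal c a) = depth a"
| "depth (Fun f args) = fold max (map depth args) 0"
| "depth (Sum x a) = Suc (depth a)"
| "depth (Aggr F x a) = Suc (depth a)"
| "depth (AggrN F i j a) = Suc (depth a)"

text \<open>Well-formedness w.r.t. the colour dimension l, the function collection Omega
  (pairs (p, f) with f : R^p -> R given on lists of length p) and the aggregation
  collection Theta.\<close>
fun wf_tl :: "nat \<Rightarrow> (nat \<times> (real list \<Rightarrow> real)) set \<Rightarrow> (real multiset \<Rightarrow> real) set \<Rightarrow> tl \<Rightarrow> bool" where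
  "wf_tl l Om Th (EqV x y) = True"
| "wf_tl l Om Th (NeqV x y) = True"
| "wf_tl l Om Th (Edge x y) = True"
| "wf_tl l Om Th (Pcol s x) = (s < l)"
| "wf_tl l Om Th (Mul a b) = (wf_tl l Om Th a \<and> wf_tl l Om Th b)"
| "wf_tl l Om Th (Add a b) = (wf_tl l Om Th a \<and> wf_tl l Om Th b)"
| "wf_tl l Om Th (Scal c a) = wf_tl l Om Th a"
| "wf_tl l Om Th (Fun f args) = ((length args, f) \<in> Om \<and> (\<forall>a \<in> set args. wf_tl l Om Th a))"
| "wf_tl l Om Th (Sum x a) = wf_tl l Om Th a"
| "wf_tl l Om Th (Aggr F x a) = (F \<in> Th \<and> wf_tl l Om Th a)"
| "wf_tl l Om Th (AggrN F i j a) = (F \<in> Th \<and> fv a \<subseteq> {j} \<and> wf_tl l Om Th a)"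

fun sem :: "nat \<Rightarrow> graph \<Rightarrow> (nat \<Rightarrow> nat) \<Rightarrow> tl \<Rightarrow> real" where
  "sem n G \<nu> (EqV x y) = (if \<nu> x = \<nu> y then 1 else 0)"
| "sem n G \<nu> (NeqV x y) = (if \<nu> x \<noteq> \<nu> y then 1 else 0)"
| "sem n G \<nu> (Edge x y) = (if adj G (\<nu> x) (\<nu> y) then 1 else 0)"
| "sem n G \<nu> (Pcol s x) = col G (\<nu> x) ! s"
| "sem n G \<nu> (Mul a b) = sem n G \<nu> a * sem n G \<nu> b"
| "sem n G \<nu> (Add a b) = sem n G \<nu> a + sem n G \<nu> b"
| "sem n G \<nu> (Scal c a) = c * sem n G \<nu> a"
| "sem n G \<nu> (Fun f args) = f (map (sem n G \<nu>) args)"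
| "sem n G \<nu> (Sum x a) = (\<Sum>v \<in> verts n. sem n G (\<nu>(x := v)) a)"
| "sem n G \<nu> (Aggr F x a) = F (image_mset (\<lambda>v. sem n G (\<nu>(x := v)) a) (mset_set (verts n)))"
| "sem n G \<nu> (AggrN F i j a) =
     F (image_mset (\<lambda>v. sem n G (\<nu>(j := v)) a) (mset_set (nbrs n G (\<nu> i))))"

definition TL :: "nat \<Rightarrow> (nat \<times> (real list \<Rightarrow> real)) set \<Rightarrow> (real multiset \<Rightarrow> real) set
                  \<Rightarrow> nat \<Rightarrow> nat \<Rightarrow> tl set" where
  "TL l Om Th k t = {\<phi>. wf_tl l Om Th \<phi> \<and> vars \<phi> \<subseteq> {1..k} \<and> depth \<phi> \<le> t}"

text \<open>Guarded fragment GTL_2: gtl2 l Om Th i phi means phi is a guarded expression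
  whose single free variable is x_i (i \<in> {1,2}).\<close>
inductive gtl2 :: "nat \<Rightarrow> (nat \<times> (real list \<Rightarrow> real)) set \<Rightarrow> (real multiset \<Rightarrow> real) set
                   \<Rightarrow> nat \<Rightarrow> tl \<Rightarrow> bool"
  for l Om Th where
  g_eq: "i \<in> {1, 2} \<Longrightarrow> gtl2 l Om Th i (EqV i i)"
| g_neq: "i \<in> {1, 2} \<Longrightarrow> gtl2 l Om Th i (NeqV i i)"
| g_col: "i \<in> {1, 2} \<Longrightarrow> s < l \<Longrightarrow> gtl2 l Om Th i (Pcol s i)"
| g_mul: "gtl2 l Om Th i a \<Longrightarrow> gtl2 l Om Th i b \<Longrightarrow> gtl2 l Om Th i (Mul a b)"
| g_add: "gtl2 l Om Th i a \<Longrightarrow> gtl2 l Om Th i b \<Longrightarrow> gtl2 l Om Th i (Add a b)"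
| g_scal: "gtl2 l Om Th i a \<Longrightarrow> gtl2 l Om Th i (Scal c a)"
| g_fun: "(length args, f) \<in> Om \<Longrightarrow> args \<noteq> [] \<Longrightarrow> (\<forall>a \<in> set args. gtl2 l Om Th i a)
          \<Longrightarrow> gtl2 l Om Th i (Fun f args)"
| g_sum: "{i, j} = {1, 2} \<Longrightarrow> gtl2 l Om Th j a \<Longrightarrow> gtl2 l Om Th i (Sum j (Mul (Edge i j) a))"
| g_aggr: "{i, j} = {1, 2} \<Longrightarrow> F \<in> Th \<Longrightarrow> gtl2 l Om Th j a \<Longrightarrow> gtl2 l Om Th i (AggrN F i j a)"

definition GTL2 :: "nat \<Rightarrow> (nat \<times> (real list \<Rightarrow> real)) set \<Rightarrow> (real multiset \<Rightarrow> real) set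
                    \<Rightarrow> nat \<Rightarrow> tl set" where
  "GTL2 l Om Th t = {\<phi>. (\<exists>i. gtl2 l Om Th i \<phi>) \<and> depth \<phi> \<le> t}"

datatype crlab = CR0 "real list" | CRS crlab "crlab multiset"

fun cr :: "nat \<Rightarrow> nat \<Rightarrow> graph \<Rightarrow> nat \<Rightarrow> crlab" where
  "cr n 0 G v = CR0 (col G v)"
| "cr n (Suc t) G v = CRS (cr n t G v) (image_mset (cr n t G) (mset_set (nbrs n G v)))"

type_synonym atype = "(bool \<times> bool) list \<times> real list list"

definition atp :: "graph \<Rightarrow> nat list \<Rightarrow> atype" where
  "atp G vs = ([(vs ! i = vs ! j, adj G (vs ! i) (vs ! j)). i \<leftarrow> [0..<length vs], j \<leftarrow> [Suc i..<length vs]],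
               map (col G) vs)"

datatype wllab = WL0 atype | WLS wllab "(atype \<times> wllab list) multiset"

text \<open>wl n t G vs = wl_k^{(t)}(G, vs) for k = length vs; vs[i := u] is v[u/(i+1)].\<close>
fun wl :: "nat \<Rightarrow> nat \<Rightarrow> graph \<Rightarrow> nat list \<Rightarrow> wllab" where
  "wl n 0 G vs = WL0 (atp G vs)"
| "wl n (Suc t) G vs = WLS (wl n t G vs)
     (image_mset (\<lambda>u. (atp G (vs @ [u]), map (\<lambda>i. wl n t G (vs[i := u])) [0..<length vs]))
        (mset_set (verts n)))"

definition vwl :: "nat \<Rightarrow> nat \<Rightarrow> nat \<Rightarrow> graph \<Rightarrow> nat \<Rightarrow> wllab" where
  "vwl n k t G v = wl n t G (replicate k v)"

definition gwl :: "nat \<Rightarrow> nat \<Rightarrow> nat \<Rightarrow> graph \<Rightarrow> wllab multiset" where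
  "gwl n k t G = image_mset (wl n t G) (mset_set {vs. length vs = k \<and> set vs \<subseteq> verts n})"

definition rho1_lab :: "nat \<Rightarrow> nat \<Rightarrow> (graph \<Rightarrow> nat \<Rightarrow> 'a) \<Rightarrow> ((graph \<times> nat) \<times> (graph \<times> nat)) set" where
  "rho1_lab n l lab = {((G, v), (H, w)). wf_graph n l G \<and> wf_graph n l H \<and>
      v \<in> verts n \<and> w \<in> verts n \<and> lab G v = lab H w}"

definition rho0_lab :: "nat \<Rightarrow> nat \<Rightarrow> (graph \<Rightarrow> 'a) \<Rightarrow> (graph \<times> graph) set" where
  "rho0_lab n l lab = {(G, H). wf_graph n l G \<and> wf_graph n l H \<and> lab G = lab H}"

text \<open>[[phi]]^{x_1 -> v}: since only expressions with free variables among {x_1} are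
  considered, the valuation can map every variable to v.\<close>
definition rho1_tl :: "nat \<Rightarrow> nat \<Rightarrow> tl set \<Rightarrow> ((graph \<times> nat) \<times> (graph \<times> nat)) set" where
  "rho1_tl n l L = {((G, v), (H, w)). wf_graph n l G \<and> wf_graph n l H \<and>
      v \<in> verts n \<and> w \<in> verts n \<and>
      (\<forall>\<phi> \<in> L. fv \<phi> \<subseteq> {1} \<longrightarrow> sem n G (\<lambda>_. v) \<phi> = sem n H (\<lambda>_. w) \<phi>)}"

definition rho0_tl :: "nat \<Rightarrow> nat \<Rightarrow> tl set \<Rightarrow> (graph \<times> graph) set" where
  "rho0_tl n l L = {(G, H). wf_graph n l G \<and> wf_graph n l H \<and>
      (\<forall>\<phi> \<in> L. fv \<phi> = {} \<longrightarrow> sem n G (\<lambda>_. 1) \<phi> = sem n H (\<lambda>_. 1) \<phi>)}"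

end

theory Submission
  imports Defs
begin

lemma fold_max_ge: "x \<in> set xs \<Longrightarrow> (x::nat) \<le> fold max xs acc"
  and fold_max_acc: "(acc::nat) \<le> fold max xs acc"
proof (induction xs arbitrary: acc)
  case Nil case 1 then show ?case by simp
next
  case Nil case 2 then show ?case by simp
next
  case (Cons a xs) case 1 then show ?case
    using Cons.IH(1)[of "max a acc"] Cons.IH(2)[of "max a acc"] by auto
next
  case (Cons a xs) case 2 then show ?case using Cons.IH(2)[of "max a acc"] by auto
qed

lemma depth_Fun: "a \<in> set args \<Longrightarrow> depth a \<le> depth (Fun f args)"
  by (simp add: fold_max_ge)

lemma fv_vars: "fv \<phi> \<subseteq> vars \<phi>"
  by (induction \<phi>) auto

lemma sem_agree:
  "wf_tl l Om Th \<phi> \<Longrightarrow> (\<forall>x\<in>fv \<phi>. \<nu> x = \<mu> x) \<Longrightarrow> sem n G \<nu> \<phi> = sem n G \<mu> \<phi>"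
proof (induction \<phi> arbitrary: \<nu> \<mu>)
  case (Fun f args)
  then have "map (sem n G \<nu>) args = map (sem n G \<mu>) args" by (auto intro: map_cong)
  then show ?case by (simp only: sem.simps)
next
  case (Sum x a)
  then show ?case by (auto intro!: sum.cong)
next
  case (Aggr F x a)
  then have "\<And>v. sem n G (\<nu>(x := v)) a = sem n G (\<mu>(x := v)) a" by auto
  then show ?case by simp
next
  case (AggrN F i j a)
  then have "\<And>v. sem n G (\<nu>(j := v)) a = sem n G (\<mu>(j := v)) a"
    by (metis (no_types, lifting) fun_upd_same singletonD subsetD wf_tl.simps(11))
  moreover have "\<nu> i = \<mu> i" using AggrN by simp
  ultimately show ?case by simp
next
  case (Mul a b)
  have "sem n G \<nu> a = sem n G \<mu> a" "sem n G \<nu> b = sem n G \<mu> b"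
    using Mul.prems by (auto intro!: Mul.IH)
  then show ?case by simp
next
  case (Add a b)
  have "sem n G \<nu> a = sem n G \<mu> a" "sem n G \<nu> b = sem n G \<mu> b"
    using Add.prems by (auto intro!: Add.IH)
  then show ?case by simp
qed auto

lemma mset_transfer:
  assumes eq: "image_mset a M = image_mset a' M'"
    and h: "\<And>x y. x \<in># M \<Longrightarrow> y \<in># M' \<Longrightarrow> a x = a' y \<Longrightarrow> b x = b' y"
  shows "image_mset b M = image_mset b' M'"
proof -
  define g where "g c = (if \<exists>x. x \<in># M \<and> a x = c then b (SOME x. x \<in># M \<and> a x = c)
      else b' (SOME y. y \<in># M' \<and> a' y = c))" for c
  have s: "a ` set_mset M = a' ` set_mset M'"
    using arg_cong[OF eq, of set_mset] by simp
  have 1: "b x = g (a x)" if xM: "x \<in># M" for x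
  proof -
    obtain y where y: "y \<in># M'" "a' y = a x" using s xM by force
    have ex: "\<exists>x'. x' \<in># M \<and> a x' = a x" using xM by blast
    then have "(SOME x'. x' \<in># M \<and> a x' = a x) \<in># M \<and> a (SOME x'. x' \<in># M \<and> a x' = a x) = a x"
      by (rule someI_ex)
    then show ?thesis using h[OF xM y(1)] h y ex unfolding g_def by metis
  qed
  have 2: "b' y = g (a' y)" if yM: "y \<in># M'" for y
  proof -
    obtain x where x: "x \<in># M" "a x = a' y" using s yM by force
    have ex: "\<exists>x'. x' \<in># M \<and> a x' = a' y" using x by blast
    then have "(SOME x'. x' \<in># M \<and> a x' = a' y) \<in># M \<and> a (SOME x'. x' \<in># M \<and> a x' = a' y) = a' y"
      by (rule someI_ex)
    then show ?thesis using h yM ex unfolding g_def by metis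
  qed
  have "image_mset b M = image_mset g (image_mset a M)"
    using 1 by (simp add: multiset.map_comp cong: image_mset_cong)
  also have "\<dots> = image_mset g (image_mset a' M')" using eq by simp
  also have "\<dots> = image_mset b' M'"
    using 2 by (simp add: multiset.map_comp cong: image_mset_cong)
  finally show ?thesis .
qed

lemma mset_filter_transfer:
  assumes fin: "finite A" "finite A'"
    and eq: "image_mset a (mset_set A) = image_mset a' (mset_set A')"
    and h: "\<And>x y. x \<in> A \<Longrightarrow> y \<in> A' \<Longrightarrow> a x = a' y \<Longrightarrow> (P x \<longleftrightarrow> P' y)"
  shows "image_mset a (mset_set {x\<in>A. P x}) = image_mset a' (mset_set {y\<in>A'. P' y})"
proof -
  have "image_mset (\<lambda>x. (P x, a x)) (mset_set A) = image_mset (\<lambda>y. (P' y, a' y)) (mset_set A')"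
    by (rule mset_transfer[OF eq]) (use h fin in auto)
  then have "image_mset snd (filter_mset fst (image_mset (\<lambda>x. (P x, a x)) (mset_set A)))
    = image_mset snd (filter_mset fst (image_mset (\<lambda>y. (P' y, a' y)) (mset_set A')))" by simp
  then show ?thesis using fin by (simp add: filter_mset_image_mset multiset.map_comp o_def)
qed

lemma no_self_adj: "wf_graph n l G \<Longrightarrow> \<not> adj G a a"
  unfolding wf_graph_def adj_def by (auto simp: doubleton_eq_iff)

lemma adj_sym: "adj G a b = adj G b a"
  unfolding adj_def by (simp add: insert_commute)

lemma atp_alt: "atp G vs = (map (\<lambda>(i,j). (vs!i = vs!j, adj G (vs!i) (vs!j)))
   (concat (map (\<lambda>i. map (\<lambda>j. (i,j)) [Suc i..<length vs]) [0..<length vs])), map (col G) vs)"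
  unfolding atp_def by (simp add: map_concat o_def)


lemma finite_verts[simp]: "finite (verts n)" by (simp add: verts_def)
lemma finite_nbrs[simp]: "finite (nbrs n G v)" by (simp add: nbrs_def)

lemma cr_col: "cr n t G v = cr n t H w \<Longrightarrow> col G v = col H w"
  by (induction t) auto

lemma sum_nbrs:
  "(\<Sum>z\<in>verts n. (if adj G v z then 1 else 0) * (f z::real)) = sum_mset (image_mset f (mset_set (nbrs n G v)))"
proof -
  have "(\<Sum>z\<in>verts n. (if adj G v z then 1 else 0) * f z) = (\<Sum>z\<in>verts n. if adj G v z then f z else 0)"
    by (rule sum.cong) auto
  also have "\<dots> = sum f (nbrs n G v)"
    by (simp add: sum.inter_filter nbrs_def)
  finally show ?thesis by (simp add: sum_unfold_sum_mset)
qed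

lemma gtl2_inv:
  "gtl2 l Om Th i \<phi> \<Longrightarrow> depth \<phi> \<le> t \<Longrightarrow> cr n t G (\<nu> i) = cr n t H (\<mu> i)
   \<Longrightarrow> sem n G \<nu> \<phi> = sem n H \<mu> \<phi>"
proof (induction i \<phi> arbitrary: t \<nu> \<mu> rule: gtl2.induct)
  case (g_col i s)
  then show ?case using cr_col by fastforce
next
  case (g_fun args f i)
  have "map (sem n G \<nu>) args = map (sem n H \<mu>) args"
  proof (rule map_cong[OF refl])
    fix a assume a: "a \<in> set args"
    have "depth a \<le> t" using depth_Fun[OF a, of f] g_fun.prems(1) by linarith
    then show "sem n G \<nu> a = sem n H \<mu> a" using g_fun.IH a g_fun.prems(2) by blast
  qed
  then show ?case by (simp only: sem.simps)
next
  case (g_sum i j a)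
  then obtain t' where t: "t = Suc t'" "depth a \<le> t'" by (cases t) auto
  have ij: "i \<noteq> j" using g_sum(1) by auto
  have eq: "image_mset (cr n t' G) (mset_set (nbrs n G (\<nu> i))) = image_mset (cr n t' H) (mset_set (nbrs n H (\<mu> i)))"
    using g_sum(5) t by simp
  have "image_mset (\<lambda>z. sem n G (\<nu>(j := z)) a) (mset_set (nbrs n G (\<nu> i)))
     = image_mset (\<lambda>z. sem n H (\<mu>(j := z)) a) (mset_set (nbrs n H (\<mu> i)))"
  proof (rule mset_transfer[OF eq])
    fix x y assume "cr n t' G x = cr n t' H y"
    then show "sem n G (\<nu>(j := x)) a = sem n H (\<mu>(j := y)) a"
      using g_sum.IH[OF t(2), of "\<nu>(j := x)" "\<mu>(j := y)"] by (simp only: fun_upd_same)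
  qed
  then show ?case using ij by (simp add: sum_nbrs)
next
  case (g_aggr i j F a)
  then obtain t' where t: "t = Suc t'" "depth a \<le> t'" by (cases t) auto
  have eq: "image_mset (cr n t' G) (mset_set (nbrs n G (\<nu> i))) = image_mset (cr n t' H) (mset_set (nbrs n H (\<mu> i)))"
    using g_aggr(6) t by simp
  have "image_mset (\<lambda>z. sem n G (\<nu>(j := z)) a) (mset_set (nbrs n G (\<nu> i)))
     = image_mset (\<lambda>z. sem n H (\<mu>(j := z)) a) (mset_set (nbrs n H (\<mu> i)))"
  proof (rule mset_transfer[OF eq])
    fix x y assume "cr n t' G x = cr n t' H y"
    then show "sem n G (\<nu>(j := x)) a = sem n H (\<mu>(j := y)) a"
      using g_aggr.IH[OF t(2), of "\<nu>(j := x)" "\<mu>(j := y)"] by (simp only: fun_upd_same)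
  qed
  then show ?case by simp
next
  case (g_mul i a b)
  then show ?case by (metis max.bounded_iff depth.simps(5) sem.simps(5))
next
  case (g_add i a b)
  then show ?case by (metis max.bounded_iff depth.simps(6) sem.simps(6))
qed auto


lemma atp_lt:
  assumes "atp G T = atp H T'" "length T = length T'" "i < j" "j < length T"
  shows "(T!i = T!j \<longleftrightarrow> T'!i = T'!j) \<and> (adj G (T!i) (T!j) \<longleftrightarrow> adj H (T'!i) (T'!j))"
proof -
  let ?L = "concat (map (\<lambda>i. map (\<lambda>j. (i,j)) [Suc i..<length T]) [0..<length T])"
  have m: "map (\<lambda>(i,j). (T!i = T!j, adj G (T!i) (T!j))) ?L = map (\<lambda>(i,j). (T'!i = T'!j, adj H (T'!i) (T'!j))) ?L"
    using assms(1,2) by (simp add: atp_alt)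
  have "(i,j) \<in> set ?L" using assms(3,4) by (auto intro!: bexI[of _ i])
  then show ?thesis using m unfolding map_eq_conv by fastforce
qed

lemma atp_any:
  assumes "atp G T = atp H T'" "length T = length T'" "p < length T" "q < length T"
    "wf_graph n l G" "wf_graph n l H"
  shows "(T!p = T!q \<longleftrightarrow> T'!p = T'!q) \<and> (adj G (T!p) (T!q) \<longleftrightarrow> adj H (T'!p) (T'!q))
     \<and> col G (T!p) = col H (T'!p)"
proof -
  have c: "map (col G) T = map (col H) T'" using assms(1) by (simp add: atp_alt)
  then have "col G (T!p) = col H (T'!p)" using assms(2,3)
    by (metis nth_map)
  moreover have "(T!p = T!q \<longleftrightarrow> T'!p = T'!q) \<and> (adj G (T!p) (T!q) \<longleftrightarrow> adj H (T'!p) (T'!q))"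
  proof (cases p q rule: linorder_cases)
    case less then show ?thesis using atp_lt[OF assms(1,2)] assms by blast
  next
    case equal then show ?thesis using no_self_adj assms(5,6) by simp
  next
    case greater then show ?thesis using atp_lt[OF assms(1,2) greater] assms adj_sym by metis
  qed
  ultimately show ?thesis by blast
qed

definition key :: "nat \<Rightarrow> nat \<Rightarrow> graph \<Rightarrow> nat list \<Rightarrow> nat \<Rightarrow> atype \<times> wllab list \<times> wllab" where
  "key n t G vs u = (atp G (vs @ [u]), map (\<lambda>i. wl n t G (vs[i := u])) [0..<length vs], wl n t G vs)"

definition Wm :: "nat list \<Rightarrow> nat \<Rightarrow> nat \<Rightarrow> nat list" where
  "Wm vs u m = (if m = length vs then vs else vs[m := u])"

definition tau :: "nat \<Rightarrow> nat \<Rightarrow> nat \<Rightarrow> nat" where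
  "tau k m p = (if p = m then k else if p = k then m else p)"

lemma length_Wm[simp]: "length (Wm vs u m) = length vs" by (simp add: Wm_def)

lemma reslot:
  assumes "length vs = k" "m \<le> k" "p \<le> k" "p \<noteq> m"
  shows "(Wm vs u m @ [z]) ! tau k m p = (vs @ [u]) ! p" and "tau k m p < k"
  using assms by (auto simp: Wm_def tau_def nth_append)

lemma key_Wm:
  assumes "key n t G vs u = key n t H ws w" "length vs = k" "length ws = k" "m \<le> k"
  shows "wl n t G (Wm vs u m) = wl n t H (Wm ws w m)"
proof (cases "m = k")
  case True then show ?thesis using assms by (simp add: key_def Wm_def)
next
  case False
  then have "m < k" using assms by simp
  moreover have "map (\<lambda>i. wl n t G (vs[i := u])) [0..<k] = map (\<lambda>i. wl n t H (ws[i := w])) [0..<k]"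
    using assms by (simp add: key_def)
  ultimately have "wl n t G (vs[m := u]) = wl n t H (ws[m := w])"
    by (metis (no_types, lifting) map_eq_conv atLeastLessThan_iff set_upt zero_le)
  then show ?thesis using False assms by (simp add: Wm_def)
qed

lemma key_step:
  assumes "wl n (Suc t) G W = wl n (Suc t) H W'" "length W = length W'"
  shows "image_mset (key n t G W) (mset_set (verts n)) = image_mset (key n t H W') (mset_set (verts n))"
proof -
  have 1: "wl n t G W = wl n t H W'" and
    2: "image_mset (\<lambda>u. (atp G (W @ [u]), map (\<lambda>i. wl n t G (W[i := u])) [0..<length W])) (mset_set (verts n))
      = image_mset (\<lambda>u. (atp H (W' @ [u]), map (\<lambda>i. wl n t H (W'[i := u])) [0..<length W'])) (mset_set (verts n))"
    using assms by auto
  have "image_mset (key n t G W) (mset_set (verts n)) = image_mset (\<lambda>(a,b). (a,b,wl n t G W))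
     (image_mset (\<lambda>u. (atp G (W @ [u]), map (\<lambda>i. wl n t G (W[i := u])) [0..<length W])) (mset_set (verts n)))"
    by (simp add: multiset.map_comp o_def key_def[abs_def])
  also have "\<dots> = image_mset (\<lambda>(a,b). (a,b,wl n t H W'))
     (image_mset (\<lambda>u. (atp H (W' @ [u]), map (\<lambda>i. wl n t H (W'[i := u])) [0..<length W'])) (mset_set (verts n)))"
    using 1 2 by simp
  also have "\<dots> = image_mset (key n t H W') (mset_set (verts n))"
    by (simp add: multiset.map_comp o_def key_def[abs_def])
  finally show ?thesis .
qed


lemma tau_le: "m \<le> k \<Longrightarrow> p \<le> k \<Longrightarrow> tau k m p \<le> k"
  by (simp add: tau_def)

lemma exists_free_slot:
  assumes x: "x \<in> {1..Suc k}"
  obtains m where "m \<le> k" "m \<notin> \<pi> ` ({1..Suc k} - {x})"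
proof -
  let ?S = "{1..Suc k} - {x}"
  have cS: "card ?S = k" using x by (simp add: card_Diff_singleton)
  have "\<not> {0..k} \<subseteq> \<pi> ` ?S"
  proof
    assume sub: "{0..k} \<subseteq> \<pi> ` ?S"
    have fin: "finite (\<pi> ` ?S)" by simp
    have "card {0..k} \<le> card (\<pi> ` ?S)" by (rule card_mono[OF fin sub])
    also have "\<dots> \<le> card ?S" by (rule card_image_le) simp
    finally have "Suc k \<le> k" using cS by simp
    then show False by simp
  qed
  then obtain m where "m \<in> {0..k}" "m \<notin> \<pi> ` ?S" by blast
  then show ?thesis using that by simp
qed

lemma binder_step:
  assumes IH: "\<And>vs ws u w \<pi>. length vs = k \<Longrightarrow> length ws = k \<Longrightarrow> (\<forall>y. \<pi> y \<le> k)
      \<Longrightarrow> key n t' G vs u = key n t' H ws w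
      \<Longrightarrow> sem n G (\<lambda>y. (vs@[u]) ! \<pi> y) \<psi> = sem n H (\<lambda>y. (ws@[w]) ! \<pi> y) \<psi>"
    and wf: "wf_tl l Om Th \<psi>" and vr: "vars \<psi> \<subseteq> {1..Suc k}" and x: "x \<in> {1..Suc k}"
    and len: "length vs = k" "length ws = k" and pi: "\<forall>y. \<pi> y \<le> k"
    and ky: "key n (Suc t') G vs u = key n (Suc t') H ws w"
  shows "image_mset (\<lambda>z. sem n G ((\<lambda>y. (vs@[u]) ! \<pi> y)(x := z)) \<psi>) (mset_set (verts n))
       = image_mset (\<lambda>z. sem n H ((\<lambda>y. (ws@[w]) ! \<pi> y)(x := z)) \<psi>) (mset_set (verts n))"
proof -
  obtain m where m: "m \<le> k" "m \<notin> \<pi> ` ({1..Suc k} - {x})" using exists_free_slot[OF x] by blast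
  define \<pi>n where "\<pi>n y = (if y = x then k else tau k m (\<pi> y))" for y
  have pin: "\<forall>y. \<pi>n y \<le> k" using pi m(1) tau_le unfolding \<pi>n_def by presburger
  have agr: "sem n G' ((\<lambda>y. (vs'@[u']) ! \<pi> y)(x := z)) \<psi> = sem n G' (\<lambda>y. (Wm vs' u' m @ [z]) ! \<pi>n y) \<psi>"
    if "length vs' = k" for G' vs' u' z
  proof (rule sem_agree[OF wf], intro ballI)
    fix y assume "y \<in> fv \<psi>"
    then have y: "y \<in> {1..Suc k}" using fv_vars vr by blast
    show "((\<lambda>y. (vs'@[u']) ! \<pi> y)(x := z)) y = (Wm vs' u' m @ [z]) ! \<pi>n y"
    proof (cases "y = x")
      case True then show ?thesis using that by (simp add: \<pi>n_def nth_append)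
    next
      case False
      then have "\<pi> y \<noteq> m" using m y by auto
      then show ?thesis using reslot(1)[OF that m(1), of "\<pi> y" u' z] pi False by (simp add: \<pi>n_def)
    qed
  qed
  have "wl n (Suc t') G (Wm vs u m) = wl n (Suc t') H (Wm ws w m)"
    by (rule key_Wm[OF ky len m(1)])
  then have keq: "image_mset (key n t' G (Wm vs u m)) (mset_set (verts n))
      = image_mset (key n t' H (Wm ws w m)) (mset_set (verts n))"
    by (rule key_step) (simp add: len)
  have "image_mset (\<lambda>z. sem n G (\<lambda>y. (Wm vs u m @ [z]) ! \<pi>n y) \<psi>) (mset_set (verts n))
      = image_mset (\<lambda>z. sem n H (\<lambda>y. (Wm ws w m @ [z]) ! \<pi>n y) \<psi>) (mset_set (verts n))"
  proof (rule mset_transfer[OF keq])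
    fix z z' assume "key n t' G (Wm vs u m) z = key n t' H (Wm ws w m) z'"
    then show "sem n G (\<lambda>y. (Wm vs u m @ [z]) ! \<pi>n y) \<psi> = sem n H (\<lambda>y. (Wm ws w m @ [z']) ! \<pi>n y) \<psi>"
      using IH[of "Wm vs u m" "Wm ws w m" \<pi>n z z'] len pin by simp
  qed
  moreover have "\<And>z. sem n G ((\<lambda>y. (vs@[u]) ! \<pi> y)(x := z)) \<psi> = sem n G (\<lambda>y. (Wm vs u m @ [z]) ! \<pi>n y) \<psi>"
    using agr len by blast
  moreover have "\<And>z. sem n H ((\<lambda>y. (ws@[w]) ! \<pi> y)(x := z)) \<psi> = sem n H (\<lambda>y. (Wm ws w m @ [z]) ! \<pi>n y) \<psi>"
    using agr len by blast
  ultimately show ?thesis by simp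
qed


lemma lemC:
  assumes k1: "k \<ge> 1" and wfG: "wf_graph n l G" and wfH: "wf_graph n l H"
  shows "wf_tl l Om Th \<phi> \<Longrightarrow> vars \<phi> \<subseteq> {1..Suc k} \<Longrightarrow> depth \<phi> \<le> t
    \<Longrightarrow> length vs = k \<Longrightarrow> length ws = k \<Longrightarrow> (\<forall>y. \<pi> y \<le> k)
    \<Longrightarrow> key n t G vs u = key n t H ws w
    \<Longrightarrow> sem n G (\<lambda>y. (vs@[u]) ! \<pi> y) \<phi> = sem n H (\<lambda>y. (ws@[w]) ! \<pi> y) \<phi>"
proof (induction \<phi> arbitrary: t vs ws u w \<pi>)
  case (EqV x y)
  have "atp G (vs@[u]) = atp H (ws@[w])" using EqV by (simp add: key_def)
  then show ?case using atp_any[of G "vs@[u]" H "ws@[w]" "\<pi> x" "\<pi> y"] EqV wfG wfH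
    by (simp add: le_imp_less_Suc)
next
  case (NeqV x y)
  have "atp G (vs@[u]) = atp H (ws@[w])" using NeqV by (simp add: key_def)
  then show ?case using atp_any[of G "vs@[u]" H "ws@[w]" "\<pi> x" "\<pi> y"] NeqV wfG wfH
    by (simp add: le_imp_less_Suc)
next
  case (Edge x y)
  have "atp G (vs@[u]) = atp H (ws@[w])" using Edge by (simp add: key_def)
  then show ?case using atp_any[of G "vs@[u]" H "ws@[w]" "\<pi> x" "\<pi> y"] Edge wfG wfH
    by (simp add: le_imp_less_Suc)
next
  case (Pcol s x)
  have "atp G (vs@[u]) = atp H (ws@[w])" using Pcol by (simp add: key_def)
  then show ?case using atp_any[of G "vs@[u]" H "ws@[w]" "\<pi> x" "\<pi> x"] Pcol wfG wfH
    by (simp add: le_imp_less_Suc)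
next
  case (Mul a b)
  have "sem n G (\<lambda>y. (vs@[u]) ! \<pi> y) a = sem n H (\<lambda>y. (ws@[w]) ! \<pi> y) a"
       "sem n G (\<lambda>y. (vs@[u]) ! \<pi> y) b = sem n H (\<lambda>y. (ws@[w]) ! \<pi> y) b"
    using Mul.prems by (auto intro!: Mul.IH)
  then show ?case by simp
next
  case (Add a b)
  have "sem n G (\<lambda>y. (vs@[u]) ! \<pi> y) a = sem n H (\<lambda>y. (ws@[w]) ! \<pi> y) a"
       "sem n G (\<lambda>y. (vs@[u]) ! \<pi> y) b = sem n H (\<lambda>y. (ws@[w]) ! \<pi> y) b"
    using Add.prems by (auto intro!: Add.IH)
  then show ?case by simp
next
  case (Scal c a)
  then show ?case by simp
next
  case (Fun f args)
  have "map (sem n G (\<lambda>y. (vs@[u]) ! \<pi> y)) args = map (sem n H (\<lambda>y. (ws@[w]) ! \<pi> y)) args"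
  proof (rule map_cong[OF refl])
    fix a assume a: "a \<in> set args"
    show "sem n G (\<lambda>y. (vs@[u]) ! \<pi> y) a = sem n H (\<lambda>y. (ws@[w]) ! \<pi> y) a"
      using Fun.prems a depth_Fun[OF a, of f]
      by (intro Fun.IH[OF a]) (auto simp del: depth.simps)
  qed
  then show ?case by (simp only: sem.simps)
next
  case (Sum x a)
  then obtain t' where t: "t = Suc t'" "depth a \<le> t'" by (cases t) auto
  have "image_mset (\<lambda>z. sem n G ((\<lambda>y. (vs@[u]) ! \<pi> y)(x := z)) a) (mset_set (verts n))
       = image_mset (\<lambda>z. sem n H ((\<lambda>y. (ws@[w]) ! \<pi> y)(x := z)) a) (mset_set (verts n))"
    by (rule binder_step[where t'=t']) (use Sum t in auto)
  then show ?case by (simp add: sum_unfold_sum_mset)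
next
  case (Aggr F x a)
  then obtain t' where t: "t = Suc t'" "depth a \<le> t'" by (cases t) auto
  have "image_mset (\<lambda>z. sem n G ((\<lambda>y. (vs@[u]) ! \<pi> y)(x := z)) a) (mset_set (verts n))
       = image_mset (\<lambda>z. sem n H ((\<lambda>y. (ws@[w]) ! \<pi> y)(x := z)) a) (mset_set (verts n))"
    by (rule binder_step[where t'=t']) (use Aggr t in auto)
  then show ?case by simp
next
  case (AggrN F i j a)
  then obtain t' where t: "t = Suc t'" "depth a \<le> t'" by (cases t) auto
  have fva: "fv a \<subseteq> {j}" and wfa: "wf_tl l Om Th a" using AggrN by auto
  define p where "p = \<pi> i"
  define m where "m = (if p = k then 0 else k)"
  define q where "q = tau k m p"
  have pk: "p \<le> k" using AggrN p_def by auto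
  have mk: "m \<le> k" "p \<noteq> m" using k1 by (auto simp: m_def)
  have q: "q < k" using reslot(2)[OF AggrN.prems(4) mk(1) pk mk(2)] q_def by simp
  have vi: "(vs'@[u']) ! p = Wm vs' u' m ! q" if "length vs' = k" for vs' u'
    using reslot(1)[OF that mk(1) pk mk(2), of u' 0] q that by (simp add: q_def nth_append)
  have agr: "sem n G' ((\<lambda>y. (vs'@[u']) ! \<pi> y)(j := z)) a = sem n G' (\<lambda>y. (Wm vs' u' m @ [z]) ! k) a"
    if "length vs' = k" for G' vs' u' z
    by (rule sem_agree[OF wfa]) (use fva that in \<open>auto simp: nth_append\<close>)
  have "wl n (Suc t') G (Wm vs u m) = wl n (Suc t') H (Wm ws w m)"
    by (rule key_Wm[OF _ AggrN.prems(4,5) mk(1)]) (use AggrN.prems t in simp)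
  then have keq: "image_mset (key n t' G (Wm vs u m)) (mset_set (verts n))
      = image_mset (key n t' H (Wm ws w m)) (mset_set (verts n))"
    by (rule key_step) (simp add: AggrN.prems(4,5))
  have keqN: "image_mset (key n t' G (Wm vs u m)) (mset_set {z \<in> verts n. adj G (Wm vs u m ! q) z})
      = image_mset (key n t' H (Wm ws w m)) (mset_set {z \<in> verts n. adj H (Wm ws w m ! q) z})"
  proof (rule mset_filter_transfer[OF _ _ keq], simp, simp)
    fix z z' assume "key n t' G (Wm vs u m) z = key n t' H (Wm ws w m) z'"
    then have e: "atp G (Wm vs u m @ [z]) = atp H (Wm ws w m @ [z'])" by (simp add: key_def)
    show "adj G (Wm vs u m ! q) z = adj H (Wm ws w m ! q) z'"
      using atp_any[OF e _ _ _ wfG wfH, of q k] q AggrN.prems(4,5)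
      by (simp add: nth_append)
  qed
  have "image_mset (\<lambda>z. sem n G (\<lambda>y. (Wm vs u m @ [z]) ! k) a) (mset_set {z \<in> verts n. adj G (Wm vs u m ! q) z})
      = image_mset (\<lambda>z. sem n H (\<lambda>y. (Wm ws w m @ [z]) ! k) a) (mset_set {z \<in> verts n. adj H (Wm ws w m ! q) z})"
    by (rule mset_transfer[OF keqN]) (use AggrN.IH[OF wfa _ t(2), of _ _ "\<lambda>_. k"] AggrN.prems in auto)
  then show ?case using agr[OF AggrN.prems(4)] agr[OF AggrN.prems(5)] vi[OF AggrN.prems(4)] vi[OF AggrN.prems(5)]
    by (simp add: nbrs_def p_def)
qed


lemma wl_atp: "wl n t G vs = wl n t H ws \<Longrightarrow> atp G vs = atp H ws"
  by (induction t) auto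

lemma atp_rep:
  assumes "wf_graph n l G" "wf_graph n l H" "col G z = col H z'"
  shows "atp G (replicate N z) = atp H (replicate N z')"
proof -
  let ?L = "concat (map (\<lambda>i. map (\<lambda>j. (i,j)) [Suc i..<N]) [0..<N])"
  have "map (\<lambda>(i,j). (replicate N z!i = replicate N z!j, adj G (replicate N z!i) (replicate N z!j))) ?L
     = map (\<lambda>(i,j). (replicate N z'!i = replicate N z'!j, adj H (replicate N z'!i) (replicate N z'!j))) ?L"
  proof (rule map_cong[OF refl])
    fix p assume "p \<in> set ?L"
    then obtain i j where p: "p = (i,j)" "i < N" "j < N" by auto
    then show "(\<lambda>(i,j). (replicate N z!i = replicate N z!j, adj G (replicate N z!i) (replicate N z!j))) p
      = (\<lambda>(i,j). (replicate N z'!i = replicate N z'!j, adj H (replicate N z'!i) (replicate N z'!j))) p"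
      using no_self_adj[OF assms(1)] no_self_adj[OF assms(2)] by simp
  qed
  then show ?thesis using assms(3) by (simp add: atp_alt)
qed

lemma rep_upd: "(replicate k x)[i := x] = replicate k x"
  by (induction k arbitrary: i) (auto split: nat.split)

lemma key_rep:
  assumes k1: "k \<ge> 1" and wfG: "wf_graph n l G" and wfH: "wf_graph n l H"
    and eq: "wl n t G (replicate k z) = wl n t H (replicate k z')"
  shows "key n t G (replicate k z) z = key n t H (replicate k z') z'"
proof -
  have "atp G (replicate k z) = atp H (replicate k z')" using wl_atp[OF eq] .
  then have "map (col G) (replicate k z) = map (col H) (replicate k z')" by (simp add: atp_alt)
  then have c: "col G z = col H z'" using k1 by (cases k) auto
  have "atp G (replicate k z @ [z]) = atp H (replicate k z' @ [z'])"
    using atp_rep[OF wfG wfH c, of "Suc k"] by (simp add: replicate_append_same)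
  moreover have "map (\<lambda>i. wl n t G ((replicate k z)[i := z])) [0..<k] = map (\<lambda>i. wl n t H ((replicate k z')[i := z'])) [0..<k]"
  proof -
    have "\<And>i (x::nat). (replicate k x)[i := x] = replicate k x" by (rule rep_upd)
    then show ?thesis using eq by simp
  qed
  ultimately show ?thesis using eq by (simp add: key_def)
qed

lemma rep_sem:
  assumes k1: "k \<ge> 1" and wfG: "wf_graph n l G" and wfH: "wf_graph n l H"
    and eq: "wl n t G (replicate k z) = wl n t H (replicate k z')"
    and "wf_tl l Om Th \<phi>" "vars \<phi> \<subseteq> {1..Suc k}" "depth \<phi> \<le> t"
  shows "sem n G (\<lambda>_. z) \<phi> = sem n H (\<lambda>_. z') \<phi>"
proof -
  have "sem n G (\<lambda>y. (replicate k z @ [z]) ! (\<lambda>_. 0) y) \<phi> = sem n H (\<lambda>y. (replicate k z' @ [z']) ! (\<lambda>_. 0) y) \<phi>"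
    by (rule lemC[OF k1 wfG wfH, where Om=Om and Th=Th and t=t]) (use assms(5-7) key_rep[OF k1 wfG wfH eq] in \<open>simp_all\<close>)
  moreover have "(replicate k z @ [z]) ! 0 = z" "(replicate k z' @ [z']) ! 0 = z'"
    using k1 by (auto simp: nth_append)
  ultimately show ?thesis by simp
qed

fun lab0 :: "wllab \<Rightarrow> atype" where
  "lab0 (WL0 a) = a"
| "lab0 (WLS c M) = lab0 c"

lemma lab0_wl: "lab0 (wl n t G vs) = atp G vs"
  by (induction t) auto

definition diag :: "wllab \<Rightarrow> bool" where
  "diag c = (\<forall>p \<in> set (fst (lab0 c)). fst p)"

lemma set_pairs: "set (concat (map (\<lambda>i. map (\<lambda>j. (i,j)) [Suc i..<N]) [0..<N])) = {(i,j). i < j \<and> j < N}"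
  (is "?A = ?B")
proof
  show "?A \<subseteq> ?B" by auto
  show "?B \<subseteq> ?A"
  proof
    fix p assume "p \<in> ?B"
    then obtain a b where "p = (a,b)" "a < b" "b < N" by auto
    then show "p \<in> ?A" by (auto intro!: bexI[of _ a])
  qed
qed

lemma diag_wl:
  assumes "length vs = k" "k \<ge> 1"
  shows "diag (wl n t G vs) \<longleftrightarrow> vs = replicate k (vs ! 0)"
proof -
  have sL: "set (concat (map (\<lambda>i. map (\<lambda>j. (i,j)) [Suc i..<length vs]) [0..<length vs]))
      = {(i,j). i < j \<and> j < length vs}" by (rule set_pairs)
  have "diag (wl n t G vs) \<longleftrightarrow> (\<forall>(i,j)\<in>{(i,j). i < j \<and> j < length vs}. vs!i = vs!j)"
    unfolding diag_def lab0_wl atp_alt fst_conv set_map sL by auto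
  also have "\<dots> \<longleftrightarrow> (\<forall>i j. i < j \<and> j < k \<longrightarrow> vs!i = vs!j)"
    using assms(1) by auto
  finally have "diag (wl n t G vs) \<longleftrightarrow> (\<forall>i j. i < j \<and> j < k \<longrightarrow> vs!i = vs!j)" .
  also have "\<dots> \<longleftrightarrow> vs = replicate k (vs ! 0)"
  proof
    assume h: "\<forall>i j. i < j \<and> j < k \<longrightarrow> vs!i = vs!j"
    show "vs = replicate k (vs ! 0)"
    proof (rule nth_equalityI)
      show "length vs = length (replicate k (vs ! 0))" using assms by simp
      fix i assume "i < length vs"
      then show "vs ! i = replicate k (vs ! 0) ! i" using h[rule_format, of 0 i] assms by (cases "i = 0") auto
    qed
  next
    assume e: "vs = replicate k (vs ! 0)"
    define c where "c = vs ! 0"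
    have e2: "vs = replicate k c" unfolding c_def by (rule e)
    show "\<forall>i j. i < j \<and> j < k \<longrightarrow> vs!i = vs!j" unfolding e2 by simp
  qed
  finally show ?thesis .
qed

lemma gwl_diag:
  assumes "k \<ge> 1"
  shows "filter_mset diag (gwl n k t G) = image_mset (\<lambda>z. wl n t G (replicate k z)) (mset_set (verts n))"
proof -
  let ?T = "{vs. length vs = k \<and> set vs \<subseteq> verts n}"
  have fin: "finite ?T" using finite_lists_length_eq[of "verts n" k] by (simp add: conj_commute)
  have set: "{vs \<in> ?T. diag (wl n t G vs)} = replicate k ` verts n"
  proof (intro equalityI subsetI)
    fix vs assume "vs \<in> {vs \<in> ?T. diag (wl n t G vs)}"
    then have len: "length vs = k" and sub: "set vs \<subseteq> verts n" and d: "diag (wl n t G vs)" by auto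
    have e: "vs = replicate k (vs ! 0)" using diag_wl[OF len assms] d by simp
    have "vs ! 0 \<in> set vs" using len assms by (intro nth_mem) simp
    then have "vs ! 0 \<in> verts n" using sub by blast
    then have "vs = replicate k (vs ! 0)" "vs ! 0 \<in> verts n" using e by auto
    then show "vs \<in> replicate k ` verts n" by blast
  next
    fix vs assume "vs \<in> replicate k ` verts n"
    then obtain z where "vs = replicate k z" "z \<in> verts n" by blast
    then show "vs \<in> {vs \<in> ?T. diag (wl n t G vs)}" using diag_wl[of vs k] assms by auto
  qed
  have inj: "inj_on (replicate k) (verts n)" using assms by (auto simp: inj_on_def replicate_eq_replicate)
  have "filter_mset diag (gwl n k t G) = image_mset (wl n t G) (mset_set {vs \<in> ?T. diag (wl n t G vs)})"
    unfolding gwl_def using fin by (simp add: filter_mset_image_mset)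
  also have "\<dots> = image_mset (wl n t G) (image_mset (replicate k) (mset_set (verts n)))"
    using set image_mset_mset_set[OF inj] by simp
  finally show ?thesis by (simp add: multiset.map_comp o_def)
qed


lemma lemD:
  assumes k1: "k \<ge> 1" and wfG: "wf_graph n l G" and wfH: "wf_graph n l H"
    and eq: "image_mset (\<lambda>z. wl n t G (replicate k z)) (mset_set (verts n))
           = image_mset (\<lambda>z. wl n t H (replicate k z)) (mset_set (verts n))"
  shows "wf_tl l Om Th \<phi> \<Longrightarrow> vars \<phi> \<subseteq> {1..Suc k} \<Longrightarrow> depth \<phi> \<le> Suc t \<Longrightarrow> fv \<phi> = {}
    \<Longrightarrow> sem n G \<nu> \<phi> = sem n H \<mu> \<phi>"
proof (induction \<phi> arbitrary: \<nu> \<mu>)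
  case (Mul a b)
  have "sem n G \<nu> a = sem n H \<mu> a" "sem n G \<nu> b = sem n H \<mu> b"
    using Mul.prems by (auto intro!: Mul.IH)
  then show ?case by simp
next
  case (Add a b)
  have "sem n G \<nu> a = sem n H \<mu> a" "sem n G \<nu> b = sem n H \<mu> b"
    using Add.prems by (auto intro!: Add.IH)
  then show ?case by simp
next
  case (Scal c a)
  then show ?case by simp
next
  case (Fun f args)
  have "map (sem n G \<nu>) args = map (sem n H \<mu>) args"
  proof (rule map_cong[OF refl])
    fix a assume a: "a \<in> set args"
    show "sem n G \<nu> a = sem n H \<mu> a"
      using Fun.prems a depth_Fun[OF a, of f]
      by (intro Fun.IH[OF a]) (auto simp del: depth.simps)
  qed
  then show ?case by (simp only: sem.simps)
next
  case (Sum x a)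
  have fva: "fv a \<subseteq> {x}" and wfa: "wf_tl l Om Th a" using Sum by auto
  have agr: "sem n G' (\<nu>'(x := z)) a = sem n G' (\<lambda>_. z) a" for G' \<nu>' z
    by (rule sem_agree[OF wfa]) (use fva in auto)
  have "image_mset (\<lambda>z. sem n G (\<lambda>_. z) a) (mset_set (verts n))
      = image_mset (\<lambda>z. sem n H (\<lambda>_. z) a) (mset_set (verts n))"
    by (rule mset_transfer[OF eq]) (use Sum.prems in \<open>auto intro!: rep_sem[OF k1 wfG wfH]\<close>)
  then show ?case using agr by (simp add: sum_unfold_sum_mset)
next
  case (Aggr F x a)
  have fva: "fv a \<subseteq> {x}" and wfa: "wf_tl l Om Th a" using Aggr by auto
  have agr: "sem n G' (\<nu>'(x := z)) a = sem n G' (\<lambda>_. z) a" for G' \<nu>' z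
    by (rule sem_agree[OF wfa]) (use fva in auto)
  have "image_mset (\<lambda>z. sem n G (\<lambda>_. z) a) (mset_set (verts n))
      = image_mset (\<lambda>z. sem n H (\<lambda>_. z) a) (mset_set (verts n))"
    by (rule mset_transfer[OF eq]) (use Aggr.prems in \<open>auto intro!: rep_sem[OF k1 wfG wfH]\<close>)
  then show ?case using agr by simp
qed auto

theorem mainTheorem15:
  fixes n l t k :: nat
    and Om :: "(nat \<times> (real list \<Rightarrow> real)) set"
    and Th :: "(real multiset \<Rightarrow> real) set"
  assumes "n \<ge> 1" and "l \<ge> 1" and "k \<ge> 1"
  shows "rho1_lab n l (cr n t) \<subseteq> rho1_tl n l (GTL2 l Om Th t)
    \<and> rho1_lab n l (vwl n k t) \<subseteq> rho1_tl n l (TL l Om Th (k + 1) t)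
    \<and> rho0_lab n l (gwl n k t) \<subseteq> rho0_tl n l (TL l Om Th (k + 1) (t + 1))"
proof (intro conjI subsetI)
  fix X assume "X \<in> rho1_lab n l (cr n t)"
  then obtain G v H w where X: "X = ((G, v), (H, w))" "wf_graph n l G" "wf_graph n l H"
    "v \<in> verts n" "w \<in> verts n" "cr n t G v = cr n t H w"
    unfolding rho1_lab_def by auto
  have "sem n G (\<lambda>_. v) \<phi> = sem n H (\<lambda>_. w) \<phi>" if phi: "\<phi> \<in> GTL2 l Om Th t" for \<phi>
  proof -
    obtain i where "gtl2 l Om Th i \<phi>" "depth \<phi> \<le> t" using phi unfolding GTL2_def by blast
    then show ?thesis using gtl2_inv X(6) by fastforce
  qed
  then show "X \<in> rho1_tl n l (GTL2 l Om Th t)" using X by (auto simp: rho1_tl_def)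
next
  fix X assume "X \<in> rho1_lab n l (vwl n k t)"
  then obtain G v H w where X: "X = ((G, v), (H, w))" "wf_graph n l G" "wf_graph n l H"
    "v \<in> verts n" "w \<in> verts n" "wl n t G (replicate k v) = wl n t H (replicate k w)"
    unfolding rho1_lab_def vwl_def by auto
  have "sem n G (\<lambda>_. v) \<phi> = sem n H (\<lambda>_. w) \<phi>" if "\<phi> \<in> TL l Om Th (k + 1) t" for \<phi>
    using that by (intro rep_sem[OF assms(3) X(2,3,6)]) (auto simp: TL_def)
  then show "X \<in> rho1_tl n l (TL l Om Th (k + 1) t)" using X by (auto simp: rho1_tl_def)
next
  fix X assume "X \<in> rho0_lab n l (gwl n k t)"
  then obtain G H where X: "X = (G, H)" "wf_graph n l G" "wf_graph n l H"
    "gwl n k t G = gwl n k t H"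
    unfolding rho0_lab_def by auto
  have eq: "image_mset (\<lambda>z. wl n t G (replicate k z)) (mset_set (verts n))
           = image_mset (\<lambda>z. wl n t H (replicate k z)) (mset_set (verts n))"
    using gwl_diag[OF assms(3)] X(4) by metis
  have "sem n G (\<lambda>_. 1) \<phi> = sem n H (\<lambda>_. 1) \<phi>" if "\<phi> \<in> TL l Om Th (k + 1) (t + 1)" "fv \<phi> = {}" for \<phi>
    using that by (intro lemD[OF assms(3) X(2,3) eq]) (auto simp: TL_def)
  then show "X \<in> rho0_tl n l (TL l Om Th (k + 1) (t + 1))" using X by (auto simp: rho0_tl_def)
qed

end
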